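(* Let $\varepsilon^*$ be an ordinal and $\bar J=\langle J_\varepsilon:\varepsilon<\varepsilon^*\rangle$ a sequence of ideals, and let $\mu$ be a cardinal. Suppose $\mathrm{IND}(\bar J)$ holds and each $J_\varepsilon$ is $\mathrm{cov}(|\varepsilon^*|,\mu,\aleph_1,2)^+$-complete. Then there is an infinite set $u\subseteq\varepsilon^*$ with $|u|<\mu$ such that $\mathrm{IND}(\bar J\restriction u)$ holds.
   Context: For a set $S$ of ordinals and ideals $J_s$ ($s\in S$) each on the set $\mathrm{Dom}(J_s)$, $\mathrm{IND}(\langle J_s:s\in S\rangle)$ means: for every family $\langle f_{s,u}:s\in S,\ u\subseteq S$ finite with all elements of $u$ greater than $s\rangle$ where $f_{s,u}$ is a function from $\prod_{t\in u}\mathrm{Dom}(J_t)$ to $J_s$, there are $s_0<s_1<\dots$ in $S$ and $\alpha_\ell\in\mathrm{Dom}(J_{s_\ell})$ ($\ell<\omega$) such that for all $\ell<n<\omega$, with $u=\{s_{\ell+1},\dots,s_n\}$, we have $\alpha_\ell\notin f_{s_\ell,u}(\bar\alpha)$ where $\bar\alpha\in\prod_{t\in u}\mathrm{Dom}(J_t)$ assigns $\alpha_m$ to $s_m$. $\bar J\restriction u=\langle J_s:s\in u\rangle$. An ideal is $\chi$-complete if closed under unions of fewer than $\chi$ sets. $\mathrm{cov}(\lambda,\mu,\theta,\sigma)$ is the least cardinality of a family $\mathcal P\subseteq[\lambda]^{<\mu}$ such that every $A\in[\lambda]^{<\theta}$ is included in the union of fewer than $\sigma$ members of $\mathcal P$;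 so $\mathrm{cov}(\lambda,\mu,\aleph_1,2)$ is the least size of $\mathcal P\subseteq[\lambda]^{<\mu}$ such that every countable subset of $\lambda$ is included in some member of $\mathcal P$. *)

theory Defs
  imports Main "HOL-Library.FuncSet" "HOL-Library.Countable_Set"
begin

definition is_ideal :: "'a set \<Rightarrow> 'a set set \<Rightarrow> bool" where
  "is_ideal D I \<longleftrightarrow>
     (\<forall>A\<in>I. A \<subseteq> D) \<and> {} \<in> I \<and> D \<notin> I \<and>
     (\<forall>A\<in>I. \<forall>B. B \<subseteq> A \<longrightarrow> B \<in> I) \<and>
     (\<forall>A\<in>I. \<forall>B\<in>I. A \<union> B \<in> I)"

(* I is closed under unions of at most k many of its members,
   i.e. I is k^+-complete *)
definition closed_unions_upto :: "'a set set \<Rightarrow> 'b rel \<Rightarrow> bool" where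
  "closed_unions_upto I k \<longleftrightarrow>
     (\<forall>\<A>. \<A> \<subseteq> I \<and> (card_of \<A>, k) \<in> ordLeq \<longrightarrow> \<Union>\<A> \<in> I)"

(* P is a witness family for cov(|E|, mu, aleph_1, 2): P \<subseteq> [E]^{<mu} and every
   countable subset of E is included in some member of P. *)
definition cov_family :: "'i set \<Rightarrow> 'c rel \<Rightarrow> 'i set set \<Rightarrow> bool" where
  "cov_family E mu P \<longleftrightarrow>
     (\<forall>X\<in>P. X \<subseteq> E \<and> (card_of X, mu) \<in> ordLess) \<and>
     (\<forall>A. A \<subseteq> E \<and> countable A \<longrightarrow> (\<exists>X\<in>P. A \<subseteq> X))"

(* The assignment
   alpha_bar (s_m := alpha_m) is represented by beta with beta (s m) = alpha_m. *)
definition IND :: "'i::linorder set \<Rightarrow> ('i \<Rightarrow> 'a set) \<Rightarrow> ('i \<Rightarrow> 'a set set) \<Rightarrow> bool" where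
  "IND S Dom J \<longleftrightarrow>
     (\<forall>f :: 'i \<Rightarrow> 'i set \<Rightarrow> ('i \<Rightarrow> 'a) \<Rightarrow> 'a set.
        (\<forall>s\<in>S. \<forall>u. finite u \<and> u \<subseteq> S \<and> (\<forall>t\<in>u. s < t) \<longrightarrow>
            (\<forall>x\<in>PiE u Dom. f s u x \<in> J s))
        \<longrightarrow>
        (\<exists>(sq :: nat \<Rightarrow> 'i) (\<beta> :: 'i \<Rightarrow> 'a).
            (\<forall>n. sq n \<in> S) \<and> strict_mono sq \<and>
            (\<forall>n. \<beta> (sq n) \<in> Dom (sq n)) \<and>
            (\<forall>l n. l < n \<longrightarrow>
               \<beta> (sq l) \<notin> f (sq l) (sq ` {Suc l..n}) (restrict \<beta> (sq ` {Suc l..n})))))"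

end

theory Submission
  imports Defs
begin

definition Hyp :: "'i::linorder set \<Rightarrow> ('i \<Rightarrow> 'a set) \<Rightarrow> ('i \<Rightarrow> 'a set set) \<Rightarrow> ('i \<Rightarrow> 'i set \<Rightarrow> ('i \<Rightarrow> 'a) \<Rightarrow> 'a set) \<Rightarrow> bool" where
  "Hyp S Dom J f \<longleftrightarrow> (\<forall>s\<in>S. \<forall>u. finite u \<and> u \<subseteq> S \<and> (\<forall>t\<in>u. s < t) \<longrightarrow>
            (\<forall>x\<in>PiE u Dom. f s u x \<in> J s))"

definition Good :: "'i::linorder set \<Rightarrow> ('i \<Rightarrow> 'a set) \<Rightarrow> ('i \<Rightarrow> 'i set \<Rightarrow> ('i \<Rightarrow> 'a) \<Rightarrow> 'a set) \<Rightarrow> (nat \<Rightarrow> 'i) \<Rightarrow> ('i \<Rightarrow> 'a) \<Rightarrow> bool" where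
  "Good S Dom f sq \<beta> \<longleftrightarrow> (\<forall>n. sq n \<in> S) \<and> strict_mono sq \<and>
            (\<forall>n. \<beta> (sq n) \<in> Dom (sq n)) \<and>
            (\<forall>l n. l < n \<longrightarrow>
               \<beta> (sq l) \<notin> f (sq l) (sq ` {Suc l..n}) (restrict \<beta> (sq ` {Suc l..n})))"

lemma IND_iff: "IND S Dom J \<longleftrightarrow> (\<forall>f. Hyp S Dom J f \<longrightarrow> (\<exists>sq \<beta>. Good S Dom f sq \<beta>))"
  unfolding IND_def Hyp_def Good_def by simp

lemma IND_infinite:
  assumes "IND X Dom J" and "\<forall>s\<in>X. {} \<in> J s"
  shows "infinite X"
proof -
  have "Hyp X Dom J (\<lambda>_ _ _. {})" using assms(2) unfolding Hyp_def by simp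
  then obtain sq :: "nat \<Rightarrow> _" and \<beta> where "Good X Dom (\<lambda>_ _ _. {}) sq \<beta>"
    using assms(1) unfolding IND_iff by blast
  then have "range sq \<subseteq> X" "inj sq" by (auto simp: Good_def strict_mono_imp_inj_on)
  then show ?thesis using range_inj_infinite finite_subset by blast
qed

theorem mainTheorem7:
  fixes E :: "'i::wellorder set"
    and Dom :: "'i \<Rightarrow> 'a set"
    and J :: "'i \<Rightarrow> 'a set set"
    and mu :: "'c rel"
  assumes mu_card: "Card_order mu"
    and ideals: "\<forall>e\<in>E. is_ideal (Dom e) (J e)"
    and ind: "IND E Dom J"
    and complete: "\<exists>P. cov_family E mu P \<and>
                     (\<forall>Q. cov_family E mu Q \<longrightarrow> (card_of P, card_of Q) \<in> ordLeq) \<and>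
                     (\<forall>e\<in>E. closed_unions_upto (J e) (card_of P))"
  shows "\<exists>u. u \<subseteq> E \<and> infinite u \<and> (card_of u, mu) \<in> ordLess \<and> IND u Dom J"
proof (rule ccontr)
  assume nex: "\<not> ?thesis"
  obtain P where cov: "cov_family E mu P" and cl: "\<forall>e\<in>E. closed_unions_upto (J e) (card_of P)"
    using complete by blast
  have PE: "\<forall>X\<in>P. X \<subseteq> E \<and> (card_of X, mu) \<in> ordLess" using cov unfolding cov_family_def by blast
  have emp: "\<forall>s\<in>E. {} \<in> J s" using ideals unfolding is_ideal_def by blast
  have nind: "\<forall>X\<in>P. \<not> IND X Dom J"
  proof
    fix X assume X: "X \<in> P"
    show "\<not> IND X Dom J"
    proof
      assume h: "IND X Dom J"
      have "\<forall>s\<in>X. {} \<in> J s" using emp PE X by blast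
      then have "infinite X" using IND_infinite[OF h] by blast
      then show False using nex PE X h by blast
    qed
  qed
  have "\<forall>X\<in>P. \<exists>f. Hyp X Dom J f \<and> \<not> (\<exists>sq \<beta>. Good X Dom f sq \<beta>)"
    using nind unfolding IND_iff by blast
  then obtain fX where fX: "\<forall>X\<in>P. Hyp X Dom J (fX X) \<and> \<not> (\<exists>sq \<beta>. Good X Dom (fX X) sq \<beta>)"
    by (metis (no_types) bchoice)
  define F where "F s u x = \<Union>((\<lambda>X. fX X s u x) ` {X\<in>P. s \<in> X \<and> u \<subseteq> X})" for s u x
  have hyp: "Hyp E Dom J F"
    unfolding Hyp_def
  proof (intro ballI allI impI)
    fix s u x assume s: "s \<in> E" and u: "finite u \<and> u \<subseteq> E \<and> (\<forall>t\<in>u. s < t)" and x: "x \<in> PiE u Dom"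
    let ?A = "(\<lambda>X. fX X s u x) ` {X\<in>P. s \<in> X \<and> u \<subseteq> X}"
    have "?A \<subseteq> J s"
    proof
      fix Y assume "Y \<in> ?A"
      then obtain X where X: "X \<in> P" "s \<in> X" "u \<subseteq> X" and Y: "Y = fX X s u x" by blast
      have "Hyp X Dom J (fX X)" using fX X by blast
      then show "Y \<in> J s" unfolding Hyp_def using X u x Y by blast
    qed
    moreover have "(card_of ?A, card_of P) \<in> ordLeq"
    proof -
      have "(card_of ?A, card_of {X\<in>P. s \<in> X \<and> u \<subseteq> X}) \<in> ordLeq" by (rule card_of_image)
      moreover have "(card_of {X\<in>P. s \<in> X \<and> u \<subseteq> X}, card_of P) \<in> ordLeq"
        by (rule card_of_mono1) blast
      ultimately show ?thesis by (rule ordLeq_transitive)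
    qed
    ultimately show "F s u x \<in> J s" using cl s unfolding closed_unions_upto_def F_def by blast
  qed
  obtain sq :: "nat \<Rightarrow> 'i" and \<beta> where G: "Good E Dom F sq \<beta>"
    using ind hyp unfolding IND_iff by blast
  have "range sq \<subseteq> E" "countable (range sq)" using G unfolding Good_def by auto
  then obtain X where X: "X \<in> P" "range sq \<subseteq> X" using cov unfolding cov_family_def by blast
  have "Good X Dom (fX X) sq \<beta>"
    unfolding Good_def
  proof (intro conjI allI impI)
    fix n show "sq n \<in> X" using X by blast
  next
    show "strict_mono sq" using G unfolding Good_def by blast
  next
    fix n show "\<beta> (sq n) \<in> Dom (sq n)" using G unfolding Good_def by blast
  next
    fix l n :: nat assume "l < n"
    then have "\<beta> (sq l) \<notin> F (sq l) (sq ` {Suc l..n}) (restrict \<beta> (sq ` {Suc l..n}))"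
      using G unfolding Good_def by blast
    moreover have "X \<in> {Y\<in>P. sq l \<in> Y \<and> sq ` {Suc l..n} \<subseteq> Y}" using X by auto
    ultimately show "\<beta> (sq l) \<notin> fX X (sq l) (sq ` {Suc l..n}) (restrict \<beta> (sq ` {Suc l..n}))"
      unfolding F_def by blast
  qed
  then show False using fX X by blast
qed

end
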